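(* Let $\mathcal{F}$ be an argumentation framework and $S\subseteq A_{\mathcal{F}}$. Then $S\in\mathit{tfstg2}(\mathcal{F})$ if and only if $S$ is conflict-free and $S$ is a stage extension of $[[\mathcal{F}\setminus\Delta_{\mathcal{F},S}]]$.
   Context: An argumentation framework (AF) is $\mathcal{F}=(A_{\mathcal{F}},R_{\mathcal{F}})$ with $R_{\mathcal{F}}\subseteq A_{\mathcal{F}}\times A_{\mathcal{F}}$; $a\rightarrow b$ means $(a,b)\in R_{\mathcal{F}}$. $\mathcal{F}|_B=(A_{\mathcal{F}}\cap B,R_{\mathcal{F}}\cap(B\times B))$. Conflict-free: no $a,b\in S$ with $a\rightarrow b$; $S^\oplus=S\cup\{x:\exists y\in S,\ y\rightarrow x\}$; stage extension: conflict-free $S$ with no conflict-free $T$ such that $S^\oplus\subsetneq T^\oplus$. $\mathrm{SCC}(a)$: set of $b$ with directed attack paths (possibly length 0) from $a$ to $b$ and back. $D_S(X)=\{b\in X:\exists a\in S\setminus X,\ a\rightarrow b\}$. $\mathit{tfstg2}$: $C^0_S(a)=\mathrm{SCC}(a)$; $C^{\alpha+1}_S(a)$ = the strongly connected component of $a$ in $\mathcal{F}|_{C^\alpha_S(a)\setminus D_S(C^\alpha_S(a))}$ (empty if $a$ is not in that set); for limit $\lambda$, $C^\lambda_S(a)$ = the component of $a$ in $\mathcal{F}|_{\bigcap_{\alpha<\lambda}C^\alpha_S(a)}$; $\alpha_S(a)$ = least $\alpha$ with $a\notin C^\alpha_S(a)$ or $C^{\alpha+1}_S(a)=C^\alpha_S(a)$.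 $S\in\mathit{tfstg2}(\mathcal{F})$ iff $S$ is conflict-free and for each $a\in A_{\mathcal{F}}$, either $a\notin C^{\alpha_S(a)}_S(a)$ or $S\cap C^{\alpha_S(a)}_S(a)$ is a stage extension of $\mathcal{F}|_{C^{\alpha_S(a)}_S(a)}$. $a\Rightarrow^B_{\mathcal{F}}b$ means there is a directed attack path from $a$ to $b$ in $\mathcal{F}|_B$. For $D\subseteq A_{\mathcal{F}}$, $\Delta_{\mathcal{F},S}(D)=\{a\in A_{\mathcal{F}}:\exists b\in S\,(b\rightarrow a\text{ and not }a\Rightarrow^{A_{\mathcal{F}}\setminus D}_{\mathcal{F}}b)\}$. This operator is monotone; $\Delta_{\mathcal{F},S}$ (as a set) denotes its least fixed point. $\mathcal{F}\setminus\Delta$ denotes $\mathcal{F}|_{A_{\mathcal{F}}\setminus\Delta}$. For an AF $\mathcal{G}$, $[[\mathcal{G}]]$ is obtained by deleting all attacks between arguments in different strongly connected components of $\mathcal{G}$. *)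

theory Defs
  imports Main
begin

text \<open>An argumentation framework is a pair (arguments, attacks).
  Well-formedness (attacks within arguments) is assumed explicitly where needed.\<close>

type_synonym 'a af = "'a set \<times> ('a \<times> 'a) set"

definition args :: "'a af \<Rightarrow> 'a set" where "args F = fst F"
definition att :: "'a af \<Rightarrow> ('a \<times> 'a) set" where "att F = snd F"

definition wf_af :: "'a af \<Rightarrow> bool" where
  "wf_af F \<longleftrightarrow> att F \<subseteq> args F \<times> args F"

definition restrict :: "'a af \<Rightarrow> 'a set \<Rightarrow> 'a af" where
  "restrict F B = (args F \<inter> B, att F \<inter> (B \<times> B))"

definition conflict_free :: "'a af \<Rightarrow> 'a set \<Rightarrow> bool" where
  "conflict_free F S \<longleftrightarrow> S \<subseteq> args F \<and> (\<forall>a\<in>S. \<forall>b\<in>S. (a, b) \<notin> att F)"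

definition range_plus :: "'a af \<Rightarrow> 'a set \<Rightarrow> 'a set" where
  "range_plus F S = S \<union> {x. \<exists>y\<in>S. (y, x) \<in> att F}"

definition stage_ext :: "'a af \<Rightarrow> 'a set \<Rightarrow> bool" where
  "stage_ext F S \<longleftrightarrow> conflict_free F S \<and>
     \<not> (\<exists>T. conflict_free F T \<and> range_plus F S \<subset> range_plus F T)"

definition path_in :: "'a af \<Rightarrow> 'a set \<Rightarrow> 'a \<Rightarrow> 'a \<Rightarrow> bool" where
  "path_in F B a b \<longleftrightarrow> a \<in> args (restrict F B) \<and> b \<in> args (restrict F B) \<and>
     (a, b) \<in> (att (restrict F B))\<^sup>*"

text \<open>Strongly connected component of a in F|_B (empty if a is not an argument of F|_B).\<close>
definition comp_in :: "'a af \<Rightarrow> 'a set \<Rightarrow> 'a \<Rightarrow> 'a set" where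
  "comp_in F B a = {b. path_in F B a b \<and> path_in F B b a}"

definition SCC :: "'a af \<Rightarrow> 'a \<Rightarrow> 'a set" where
  "SCC F a = comp_in F (args F) a"

definition D_S :: "'a af \<Rightarrow> 'a set \<Rightarrow> 'a set \<Rightarrow> 'a set" where
  "D_S F S X = {b\<in>X. \<exists>a\<in>S - X. (a, b) \<in> att F}"

definition C_step :: "'a af \<Rightarrow> 'a set \<Rightarrow> 'a \<Rightarrow> 'a set \<Rightarrow> 'a set" where
  "C_step F S a X = comp_in F (X - D_S F S X) a"

text \<open>The set of all members C^alpha_S(a) of the transfinite sequence, generated
  inductively: C^0, successor steps, and limit steps (component of a in the
  intersection of a nonempty family of earlier members).\<close>
inductive_set C_stages :: "'a af \<Rightarrow> 'a set \<Rightarrow> 'a \<Rightarrow> 'a set set"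
  for F :: "'a af" and S :: "'a set" and a :: 'a where
  C_zero: "SCC F a \<in> C_stages F S a"
| C_succ: "X \<in> C_stages F S a \<Longrightarrow> C_step F S a X \<in> C_stages F S a"
| C_lim: "\<forall>Y\<in>M. Y \<in> C_stages F S a \<Longrightarrow> M \<noteq> {} \<Longrightarrow> comp_in F (\<Inter>M) a \<in> C_stages F S a"

text \<open>tfstg2: the final member C^{alpha_S(a)}_S(a) is the member X with
  a \<notin> X or C_step X = X; the condition is required whenever a \<in> X.\<close>
definition tfstg2 :: "'a af \<Rightarrow> 'a set \<Rightarrow> bool" where
  "tfstg2 F S \<longleftrightarrow> conflict_free F S \<and>
     (\<forall>a\<in>args F. \<forall>X\<in>C_stages F S a.
        a \<in> X \<and> C_step F S a X = X \<longrightarrow> stage_ext (restrict F X) (S \<inter> X))"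

definition Delta_op :: "'a af \<Rightarrow> 'a set \<Rightarrow> 'a set \<Rightarrow> 'a set" where
  "Delta_op F S D = {a\<in>args F. \<exists>b\<in>S. (b, a) \<in> att F \<and> \<not> path_in F (args F - D) a b}"

definition Delta :: "'a af \<Rightarrow> 'a set \<Rightarrow> 'a set" where
  "Delta F S = lfp (Delta_op F S)"

definition scc_split :: "'a af \<Rightarrow> 'a af" where
  "scc_split G = (args G, {(x, y) \<in> att G. y \<in> SCC G x})"

end

theory Submission
  imports Defs
begin

lemma path_in_iff: "path_in F B a b \<longleftrightarrow> a \<in> args F \<and> a \<in> B \<and> b \<in> args F \<and> b \<in> B \<and>
   (a, b) \<in> (att F \<inter> B \<times> B)\<^sup>*"
  by (auto simp: path_in_def restrict_def args_def att_def)

lemma path_trans: "path_in F B a b \<Longrightarrow> path_in F B b c \<Longrightarrow> path_in F B a c"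
  unfolding path_in_iff by (meson rtrancl_trans)

lemma path_mono: "B \<subseteq> B' \<Longrightarrow> path_in F B a b \<Longrightarrow> path_in F B' a b"
proof -
  assume "B \<subseteq> B'" "path_in F B a b"
  moreover have "(att F \<inter> B \<times> B)\<^sup>* \<subseteq> (att F \<inter> B' \<times> B')\<^sup>*"
    using \<open>B \<subseteq> B'\<close> by (intro rtrancl_mono) auto
  ultimately show ?thesis unfolding path_in_iff by auto
qed

lemma path_edge: "a \<in> args F \<Longrightarrow> a \<in> B \<Longrightarrow> b \<in> args F \<Longrightarrow> b \<in> B \<Longrightarrow> (a, b) \<in> att F \<Longrightarrow> path_in F B a b"
  unfolding path_in_iff by auto

lemma path_refl: "a \<in> args F \<Longrightarrow> a \<in> B \<Longrightarrow> path_in F B a a"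
  unfolding path_in_iff by auto

lemma path_mem: "path_in F B a b \<Longrightarrow> a \<in> args F \<and> a \<in> B \<and> b \<in> args F \<and> b \<in> B"
  unfolding path_in_iff by auto

lemma comp_iff: "b \<in> comp_in F B a \<longleftrightarrow> path_in F B a b \<and> path_in F B b a"
  unfolding comp_in_def by auto

lemma comp_sub: "comp_in F B a \<subseteq> args F \<inter> B"
  unfolding comp_in_def using path_mem by fastforce

lemma comp_sc_aux:
  assumes wf: "wf_af F" and "(x, z) \<in> (att F \<inter> B \<times> B)\<^sup>*" "(z, y) \<in> (att F \<inter> B \<times> B)\<^sup>*"
    and "x \<in> comp_in F B a" "y \<in> comp_in F B a"
  shows "(x, z) \<in> (att F \<inter> comp_in F B a \<times> comp_in F B a)\<^sup>*"
  using assms(2-5)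
proof (induction rule: rtrancl_induct)
  case base
  then show ?case by simp
next
  case (step u z)
  have ua: "u \<in> args F \<and> u \<in> B" "z \<in> args F \<and> z \<in> B" "(u, z) \<in> att F"
    using step(2) wf unfolding wf_af_def by blast+
  have uy: "(u, y) \<in> (att F \<inter> B \<times> B)\<^sup>*"
    using step(2) step(4) by (rule converse_rtrancl_into_rtrancl)
  have "x \<in> args F \<and> x \<in> B" using step.prems comp_iff path_mem by metis
  then have xu: "path_in F B x u" using step(1) ua unfolding path_in_iff by blast
  have uz: "path_in F B u z" using ua path_edge by metis
  have "y \<in> args F \<and> y \<in> B" using step.prems comp_iff path_mem by metis
  then have zy: "path_in F B z y" using step(4) ua unfolding path_in_iff by blast
  have ax: "path_in F B a x" "path_in F B x a" "path_in F B a y" "path_in F B y a"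
    using step.prems unfolding comp_iff by auto
  have "u \<in> comp_in F B a" unfolding comp_iff
    using path_trans[OF ax(1) xu] path_trans[OF uz path_trans[OF zy ax(4)]] by blast
  moreover have "z \<in> comp_in F B a" unfolding comp_iff
    using path_trans[OF path_trans[OF ax(1) xu] uz] path_trans[OF zy ax(4)] by blast
  moreover have xuC: "(x, u) \<in> (att F \<inter> comp_in F B a \<times> comp_in F B a)\<^sup>*"
    using step.IH uy step.prems by blast
  moreover have uzC: "(u, z) \<in> att F \<inter> comp_in F B a \<times> comp_in F B a"
    using ua(3) calculation by blast
  show ?case using xuC uzC by (rule rtrancl_into_rtrancl)
qed

lemma comp_sc: "wf_af F \<Longrightarrow> x \<in> comp_in F B a \<Longrightarrow> y \<in> comp_in F B a \<Longrightarrow> path_in F (comp_in F B a) x y"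
proof -
  assume wf: "wf_af F" and x: "x \<in> comp_in F B a" and y: "y \<in> comp_in F B a"
  have "path_in F B x a" "path_in F B a y" using x y unfolding comp_iff by auto
  then have "path_in F B x y" by (rule path_trans)
  then have "(x, y) \<in> (att F \<inter> B \<times> B)\<^sup>*" unfolding path_in_iff by auto
  then have r: "(x, y) \<in> (att F \<inter> comp_in F B a \<times> comp_in F B a)\<^sup>*"
    using comp_sc_aux[OF wf _ _ x y] by blast
  have "x \<in> args F" "y \<in> args F" using x y comp_sub[of F B a] by auto
  then show ?thesis using x y r unfolding path_in_iff by (intro conjI)
qed

definition sc :: "'a af \<Rightarrow> 'a set \<Rightarrow> bool" where
  "sc F X \<longleftrightarrow> (\<forall>x\<in>X. \<forall>y\<in>X. path_in F X x y)"

lemma sc_comp: "wf_af F \<Longrightarrow> sc F (comp_in F B a)"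
  unfolding sc_def by (intro ballI comp_sc)

lemma sc_sub: "sc F X \<Longrightarrow> a \<in> X \<Longrightarrow> X \<subseteq> B \<Longrightarrow> X \<subseteq> comp_in F B a"
proof
  fix x assume "sc F X" "a \<in> X" "X \<subseteq> B" "x \<in> X"
  then have "path_in F X a x" "path_in F X x a" unfolding sc_def by auto
  then show "x \<in> comp_in F B a" unfolding comp_iff using path_mono[OF \<open>X \<subseteq> B\<close>] by auto
qed

lemma Delta_mono: "mono (Delta_op F S)"
proof (rule monoI)
  fix D D' :: "'a set" assume "D \<subseteq> D'"
  then have "args F - D' \<subseteq> args F - D" by blast
  show "Delta_op F S D \<subseteq> Delta_op F S D'"
  proof
    fix x assume "x \<in> Delta_op F S D"
    then obtain b where b: "x \<in> args F" "b \<in> S" "(b, x) \<in> att F" "\<not> path_in F (args F - D) x b"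
      unfolding Delta_op_def by blast
    then have "\<not> path_in F (args F - D') x b" using path_mono[OF \<open>args F - D' \<subseteq> args F - D\<close>] by blast
    then show "x \<in> Delta_op F S D'" using b unfolding Delta_op_def by blast
  qed
qed

lemma Delta_fix: "Delta F S = Delta_op F S (Delta F S)"
  unfolding Delta_def using Delta_mono by (rule lfp_unfold)

lemma Delta_attacked: "x \<in> Delta F S \<Longrightarrow> \<exists>b\<in>S. (b, x) \<in> att F"
  using Delta_fix[of F S] unfolding Delta_op_def by blast

lemma Delta_args: "Delta F S \<subseteq> args F"
  using Delta_fix[of F S] unfolding Delta_op_def by blast

lemma Delta_disj_fixed:
  assumes wf: "wf_af F" and fx: "C_step F S a X = X"
  shows "Delta F S \<inter> X = {}"
proof -
  have Xc: "X = comp_in F (X - D_S F S X) a" using fx unfolding C_step_def by simp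
  have scX: "sc F X" using sc_comp[OF wf, of "X - D_S F S X" a] by (simp only: Xc[symmetric])
  have XAD: "X \<subseteq> args F \<inter> (X - D_S F S X)" using comp_sub[of F "X - D_S F S X" a] by (simp only: Xc[symmetric])
  then have XA: "X \<subseteq> args F" by blast
  have noD: "D_S F S X \<inter> X = {}" using XAD by blast
  have "lfp (Delta_op F S) \<subseteq> - X"
  proof (rule lfp_induct[OF Delta_mono])
    show "Delta_op F S (inf (lfp (Delta_op F S)) (- X)) \<subseteq> - X"
    proof
      fix x assume xin: "x \<in> Delta_op F S (inf (lfp (Delta_op F S)) (- X))"
      show "x \<in> - X"
      proof
        assume xX: "x \<in> X"
        obtain b where b: "b \<in> S" "(b, x) \<in> att F"
          and np: "\<not> path_in F (args F - (lfp (Delta_op F S) \<inter> - X)) x b"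
          using xin unfolding Delta_op_def by auto
        show False
        proof (cases "b \<in> X")
          case True
          then have "path_in F X x b" using scX xX unfolding sc_def by blast
          moreover have "X \<subseteq> args F - (lfp (Delta_op F S) \<inter> - X)" using XA by blast
          ultimately show False using np path_mono[of X] by blast
        next
          case False
          then have "x \<in> D_S F S X" unfolding D_S_def using b xX by blast
          then show False using noD xX by blast
        qed
      qed
    qed
  qed
  then show ?thesis unfolding Delta_def by blast
qed

lemma stage_comp: "Y \<in> C_stages F S a \<Longrightarrow> \<exists>B. Y = comp_in F B a"
  by (induction rule: C_stages.induct) (auto simp: SCC_def C_step_def)

lemma invariant:
  assumes wf: "wf_af F" and a: "a \<in> args F" "a \<notin> Delta F S"
    and Y: "Y \<in> C_stages F S a"
  shows "comp_in F (args F - Delta F S) a \<subseteq> Y"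
proof -
  let ?K = "comp_in F (args F - Delta F S) a"
  have "path_in F (args F - Delta F S) a a" using a by (intro path_refl) auto
  then have aK: "a \<in> ?K" unfolding comp_iff by blast
  have scK: "sc F ?K" using wf by (rule sc_comp)
  have KA: "?K \<subseteq> args F - Delta F S" using comp_sub[of F "args F - Delta F S" a] by blast
  show ?thesis using Y
  proof (induction rule: C_stages.induct)
    case C_zero
    show ?case unfolding SCC_def using sc_sub[OF scK aK] KA by blast
  next
    case (C_succ X)
    have "?K \<subseteq> X - D_S F S X"
    proof
      fix x assume xK: "x \<in> ?K"
      have "x \<notin> D_S F S X"
      proof
        assume "x \<in> D_S F S X"
        then obtain b where b: "b \<in> S" "b \<notin> X" "(b, x) \<in> att F" unfolding D_S_def by blast
        have "x \<in> Delta F S"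
        proof -
          have "\<not> path_in F (args F - Delta F S) x b"
          proof
            assume p: "path_in F (args F - Delta F S) x b"
            have ax: "path_in F (args F - Delta F S) a x" "path_in F (args F - Delta F S) x a"
              using xK unfolding comp_iff by auto
            have "b \<in> args F - Delta F S" "x \<in> args F - Delta F S" using path_mem[OF p] by blast+
            then have "path_in F (args F - Delta F S) b x" using b(3) path_edge[of b F _ x] by blast
            then have "b \<in> ?K" unfolding comp_iff using path_trans[OF ax(1) p] path_trans[OF _ ax(2)] by blast
            then show False using C_succ.IH b(2) by blast
          qed
          moreover have "x \<in> args F" using xK KA by blast
          ultimately have "x \<in> Delta_op F S (Delta F S)" unfolding Delta_op_def using b by blast
          then show ?thesis by (subst Delta_fix, assumption)
        qed
        then show False using xK KA by blast
      qed
      then show "x \<in> X - D_S F S X" using xK C_succ.IH by blast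
    qed
    then show ?case unfolding C_step_def using sc_sub[OF scK aK] by blast
  next
    case (C_lim M)
    then have "?K \<subseteq> \<Inter>M" by blast
    then show ?case using sc_sub[OF scK aK] by blast
  qed
qed

lemma fixed_eq:
  assumes wf: "wf_af F" and X: "X \<in> C_stages F S a" and aX: "a \<in> X" and fx: "C_step F S a X = X"
  shows "a \<notin> Delta F S \<and> X = comp_in F (args F - Delta F S) a"
proof -
  have Xc: "X = comp_in F (X - D_S F S X) a" using fx unfolding C_step_def by simp
  have scX: "sc F X" using sc_comp[OF wf, of "X - D_S F S X" a] by (simp only: Xc[symmetric])
  have XAD: "X \<subseteq> args F \<inter> (X - D_S F S X)" using comp_sub[of F "X - D_S F S X" a] by (simp only: Xc[symmetric])
  then have XA: "X \<subseteq> args F" by blast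
  have dj: "Delta F S \<inter> X = {}" by (rule Delta_disj_fixed[OF wf fx])
  then have aD: "a \<notin> Delta F S" using aX by blast
  have "X \<subseteq> comp_in F (args F - Delta F S) a" using sc_sub[OF scX aX] XA dj by blast
  moreover have "comp_in F (args F - Delta F S) a \<subseteq> X"
    using invariant[OF wf _ aD X] aX XA by blast
  ultimately show ?thesis using aD by blast
qed

lemma exists_fixed:
  assumes wf: "wf_af F" and a: "a \<in> args F" "a \<notin> Delta F S"
  shows "\<exists>X\<in>C_stages F S a. a \<in> X \<and> C_step F S a X = X \<and> X = comp_in F (args F - Delta F S) a"
proof -
  let ?K = "comp_in F (args F - Delta F S) a"
  let ?M = "C_stages F S a"
  let ?X0 = "comp_in F (\<Inter>?M) a"
  have "path_in F (args F - Delta F S) a a" using a by (intro path_refl) auto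
  then have aK: "a \<in> ?K" unfolding comp_iff by blast
  have scK: "sc F ?K" using wf by (rule sc_comp)
  have Mne: "?M \<noteq> {}" using C_stages.C_zero[of F a S] by blast
  have X0: "?X0 \<in> ?M" using C_stages.C_lim[OF _ Mne] by blast
  have KM: "?K \<subseteq> \<Inter>?M" using invariant[OF wf a] by blast
  have KX0: "?K \<subseteq> ?X0" using sc_sub[OF scK aK KM] .
  have aX0: "a \<in> ?X0" using KX0 aK by blast
  have "C_step F S a ?X0 \<in> ?M" using C_stages.C_succ[OF X0] .
  then have "\<Inter>?M \<subseteq> C_step F S a ?X0" by blast
  moreover have "C_step F S a ?X0 \<subseteq> ?X0" unfolding C_step_def using comp_sub[of F "?X0 - D_S F S ?X0" a] by blast
  moreover have "?X0 \<subseteq> \<Inter>?M" using comp_sub[of F "\<Inter>?M" a] by blast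
  ultimately have fx: "C_step F S a ?X0 = ?X0" by blast
  have "?X0 = ?K" using fixed_eq[OF wf X0 aX0 fx] by blast
  then show ?thesis using X0 aX0 fx by blast
qed

lemma tfstg2_iff:
  assumes wf: "wf_af F"
  shows "tfstg2 F S \<longleftrightarrow> conflict_free F S \<and>
    (\<forall>a\<in>args F - Delta F S. stage_ext (restrict F (comp_in F (args F - Delta F S) a))
        (S \<inter> comp_in F (args F - Delta F S) a))"
proof
  assume t: "tfstg2 F S"
  show "conflict_free F S \<and> (\<forall>a\<in>args F - Delta F S. stage_ext (restrict F (comp_in F (args F - Delta F S) a))
        (S \<inter> comp_in F (args F - Delta F S) a))"
  proof (intro conjI ballI)
    show "conflict_free F S" using t unfolding tfstg2_def by blast
  next
    fix a assume a: "a \<in> args F - Delta F S"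
    then obtain X where "X \<in> C_stages F S a" "a \<in> X" "C_step F S a X = X"
      "X = comp_in F (args F - Delta F S) a" using exists_fixed[OF wf] by blast
    then show "stage_ext (restrict F (comp_in F (args F - Delta F S) a))
        (S \<inter> comp_in F (args F - Delta F S) a)" using t a unfolding tfstg2_def by blast
  qed
next
  assume r: "conflict_free F S \<and> (\<forall>a\<in>args F - Delta F S. stage_ext (restrict F (comp_in F (args F - Delta F S) a))
        (S \<inter> comp_in F (args F - Delta F S) a))"
  show "tfstg2 F S" unfolding tfstg2_def
  proof (intro conjI ballI impI)
    show "conflict_free F S" using r by blast
  next
    fix a X assume a: "a \<in> args F" and X: "X \<in> C_stages F S a" and h: "a \<in> X \<and> C_step F S a X = X"
    then have "a \<notin> Delta F S \<and> X = comp_in F (args F - Delta F S) a"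
      using fixed_eq[OF wf X] by blast
    then show "stage_ext (restrict F X) (S \<inter> X)" using r a by blast
  qed
qed

locale dc =
  fixes F :: "'a af" and B :: "'a set"
  assumes wf: "wf_af F" and BA: "B \<subseteq> args F"
begin

abbreviation K where "K x \<equiv> comp_in F B x"
abbreviation H where "H \<equiv> scc_split (restrict F B)"

lemma args_H: "args H = B"
  using BA by (auto simp: scc_split_def restrict_def args_def)

lemma SCC_restr: "SCC (restrict F B) x = K x"
proof -
  have A: "args (restrict F B) = B" using BA by (auto simp: restrict_def args_def)
  have R: "att (restrict F B) \<inter> B \<times> B = att F \<inter> B \<times> B" by (auto simp: restrict_def att_def)
  have "path_in (restrict F B) B a b \<longleftrightarrow> path_in F B a b" for a b
    unfolding path_in_iff A R using BA by blast
  then show ?thesis unfolding SCC_def comp_in_def A by blast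
qed

lemma att_H: "(x, y) \<in> att H \<longleftrightarrow> (x, y) \<in> att F \<and> x \<in> B \<and> y \<in> B \<and> y \<in> K x"
proof -
  have "att H = {(x, y) \<in> att (restrict F B). y \<in> SCC (restrict F B) x}"
    by (simp add: scc_split_def att_def)
  then show ?thesis unfolding SCC_restr by (auto simp: restrict_def att_def)
qed

lemma K_sub: "K x \<subseteq> B" using comp_sub[of F B x] by blast

lemma K_refl: "x \<in> B \<Longrightarrow> x \<in> K x"
  unfolding comp_iff using BA path_refl[of x F B] by blast

lemma K_sym: "y \<in> K x \<Longrightarrow> x \<in> K y"
  unfolding comp_iff
proof -
  assume h: "path_in F B x y \<and> path_in F B y x"
  then have "x \<in> B" using path_mem[of F B x y] by blast
  then have "path_in F B x x" using BA path_refl[of x F B] by blast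
  then have "path_in F B y x \<and> path_in F B x y" using h by blast
  then show "path_in F B y x \<and> path_in F B x y" .
qed

lemma K_eq: "y \<in> K x \<Longrightarrow> K y = K x"
proof -
  assume y: "y \<in> K x"
  then have p: "path_in F B x y" "path_in F B y x" unfolding comp_iff by auto
  show "K y = K x"
  proof
    show "K y \<subseteq> K x" unfolding subset_iff comp_iff using path_trans[OF p(1)] path_trans[OF _ p(2)] by blast
    show "K x \<subseteq> K y" unfolding subset_iff comp_iff using path_trans[OF p(2)] path_trans[OF _ p(1)] by blast
  qed
qed

lemma K_disj: "K x \<noteq> K z \<Longrightarrow> K x \<inter> K z = {}"
proof (rule ccontr)
  assume "K x \<noteq> K z" "K x \<inter> K z \<noteq> {}"
  then obtain w where "w \<in> K x" "w \<in> K z" by blast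
  then have "K w = K x" "K w = K z" using K_eq by blast+
  then show False using \<open>K x \<noteq> K z\<close> by simp
qed

lemma rp_restr: "range_plus (restrict F C) T = T \<union> {x. \<exists>y\<in>T. (y, x) \<in> att F \<and> y \<in> C \<and> x \<in> C}"
  by (auto simp: range_plus_def restrict_def att_def)

lemma rp_sub2: "T \<subseteq> C \<Longrightarrow> range_plus (restrict F C) T \<subseteq> C"
  unfolding rp_restr by blast

lemma rp_sub1: "T \<subseteq> B \<Longrightarrow> range_plus H T \<subseteq> B"
  unfolding range_plus_def att_H by blast

lemma rp_iff: assumes "T \<subseteq> B" "x \<in> B"
  shows "x \<in> range_plus H T \<longleftrightarrow> x \<in> range_plus (restrict F (K x)) (T \<inter> K x)"
proof
  assume "x \<in> range_plus H T"
  then consider "x \<in> T" | y where "y \<in> T" "(y, x) \<in> att F" "y \<in> B" "x \<in> K y"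
    unfolding range_plus_def att_H by blast
  then show "x \<in> range_plus (restrict F (K x)) (T \<inter> K x)"
  proof cases
    case 1 then show ?thesis using K_refl[OF assms(2)] unfolding rp_restr by blast
  next
    case 2
    then have "y \<in> K x" using K_sym[OF 2(4)] by blast
    then show ?thesis using 2 K_refl[OF assms(2)] unfolding rp_restr by blast
  qed
next
  assume "x \<in> range_plus (restrict F (K x)) (T \<inter> K x)"
  then consider "x \<in> T" | y where "y \<in> T" "(y, x) \<in> att F" "y \<in> K x"
    unfolding rp_restr by blast
  then show "x \<in> range_plus H T"
  proof cases
    case 1 then show ?thesis unfolding range_plus_def by blast
  next
    case 2
    then have "x \<in> K y" using K_sym[OF 2(3)] by blast
    moreover have "y \<in> B" using 2 K_sub[of x] by blast
    ultimately show ?thesis using 2 assms unfolding range_plus_def att_H by blast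
  qed
qed

lemma cf_iff: assumes "T \<subseteq> B"
  shows "conflict_free H T \<longleftrightarrow> (\<forall>x\<in>B. conflict_free (restrict F (K x)) (T \<inter> K x))"
proof
  assume c: "conflict_free H T"
  show "\<forall>x\<in>B. conflict_free (restrict F (K x)) (T \<inter> K x)"
  proof (intro ballI)
    fix x assume "x \<in> B"
    have "T \<inter> K x \<subseteq> args (restrict F (K x))"
      using assms BA K_sub[of x] by (auto simp: restrict_def args_def)
    moreover have "(a, b) \<notin> att (restrict F (K x))" if "a \<in> T \<inter> K x" "b \<in> T \<inter> K x" for a b
    proof
      assume ab: "(a, b) \<in> att (restrict F (K x))"
      have "K a = K x" using that K_eq[of a x] by blast
      then have "b \<in> K a" using that by blast
      moreover have "a \<in> B" "b \<in> B" using that K_sub[of x] by blast+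
      ultimately have "(a, b) \<in> att H" unfolding att_H using ab by (auto simp: restrict_def att_def)
      then show False using c that unfolding conflict_free_def by blast
    qed
    ultimately show "conflict_free (restrict F (K x)) (T \<inter> K x)" unfolding conflict_free_def by blast
  qed
next
  assume c: "\<forall>x\<in>B. conflict_free (restrict F (K x)) (T \<inter> K x)"
  have "T \<subseteq> args H" using assms args_H by blast
  moreover have "(a, b) \<notin> att H" if "a \<in> T" "b \<in> T" for a b
  proof
    assume "(a, b) \<in> att H"
    then have ab: "(a, b) \<in> att F" "a \<in> B" "b \<in> B" "b \<in> K a" unfolding att_H by auto
    have "a \<in> K a" using K_refl[OF ab(2)] .
    then have "(a, b) \<in> att (restrict F (K a))" using ab by (auto simp: restrict_def att_def)
    moreover have "conflict_free (restrict F (K a)) (T \<inter> K a)" using c ab by blast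
    ultimately show False using that ab \<open>a \<in> K a\<close> unfolding conflict_free_def by blast
  qed
  ultimately show "conflict_free H T" unfolding conflict_free_def by blast
qed

end

context dc begin

lemma decomp:
  assumes SB: "S \<subseteq> B"
  shows "stage_ext H S \<longleftrightarrow> (\<forall>a\<in>B. stage_ext (restrict F (K a)) (S \<inter> K a))"
proof
  assume st: "stage_ext H S"
  show "\<forall>a\<in>B. stage_ext (restrict F (K a)) (S \<inter> K a)"
  proof (intro ballI)
    fix a assume aB: "a \<in> B"
    let ?C = "K a"
    have cfS: "conflict_free H S" using st unfolding stage_ext_def by blast
    have cfC: "conflict_free (restrict F ?C) (S \<inter> ?C)" using cf_iff[OF SB] cfS aB by blast
    show "stage_ext (restrict F ?C) (S \<inter> ?C)" unfolding stage_ext_def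
    proof (intro conjI notI cfC)
      assume "\<exists>T'. conflict_free (restrict F ?C) T' \<and>
         range_plus (restrict F ?C) (S \<inter> ?C) \<subset> range_plus (restrict F ?C) T'"
      then obtain T' where T': "conflict_free (restrict F ?C) T'"
        and lt: "range_plus (restrict F ?C) (S \<inter> ?C) \<subset> range_plus (restrict F ?C) T'" by blast
      have T'C: "T' \<subseteq> ?C" using T' unfolding conflict_free_def by (auto simp: restrict_def args_def)
      define T where "T = (S - ?C) \<union> T'"
      have CB: "?C \<subseteq> B" by (rule K_sub)
      have TB: "T \<subseteq> B" unfolding T_def using SB T'C CB by blast
      have TC: "T \<inter> ?C = T'" unfolding T_def using T'C by blast
      have Tz: "T \<inter> K z = S \<inter> K z" if "K z \<noteq> ?C" for z
        using K_disj[OF that] T'C unfolding T_def by blast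
      have cfT: "conflict_free H T" unfolding cf_iff[OF TB]
      proof
        fix z assume zB: "z \<in> B"
        show "conflict_free (restrict F (K z)) (T \<inter> K z)"
        proof (cases "K z = ?C")
          case True then show ?thesis using TC T' by simp
        next
          case False then show ?thesis using Tz[OF False] cf_iff[OF SB] cfS zB by simp
        qed
      qed
      have sub: "range_plus H S \<subseteq> range_plus H T"
      proof
        fix y assume yS: "y \<in> range_plus H S"
        have yB: "y \<in> B" using rp_sub1[OF SB] yS by blast
        have y1: "y \<in> range_plus (restrict F (K y)) (S \<inter> K y)" using rp_iff[OF SB yB] yS by blast
        have "y \<in> range_plus (restrict F (K y)) (T \<inter> K y)"
        proof (cases "K y = ?C")
          case True then show ?thesis using y1 lt TC by auto
        next
          case False then show ?thesis using y1 Tz[OF False] by simp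
        qed
        then show "y \<in> range_plus H T" using rp_iff[OF TB yB] by blast
      qed
      obtain y where y: "y \<in> range_plus (restrict F ?C) T'" "y \<notin> range_plus (restrict F ?C) (S \<inter> ?C)"
        using lt by blast
      have yC: "y \<in> ?C" using rp_sub2[OF T'C] y(1) by blast
      have yB: "y \<in> B" using yC CB by blast
      have Ky: "K y = ?C" using K_eq[OF yC] .
      have "y \<in> range_plus H T" using rp_iff[OF TB yB] y(1) Ky TC by simp
      moreover have "y \<notin> range_plus H S" using rp_iff[OF SB yB] y(2) Ky by simp
      ultimately have "range_plus H S \<subset> range_plus H T" using sub by blast
      then show False using st cfT unfolding stage_ext_def by blast
    qed
  qed
next
  assume all: "\<forall>a\<in>B. stage_ext (restrict F (K a)) (S \<inter> K a)"
  have cfS: "conflict_free H S" unfolding cf_iff[OF SB] using all unfolding stage_ext_def by blast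
  show "stage_ext H S" unfolding stage_ext_def
  proof (intro conjI notI cfS)
    assume "\<exists>T. conflict_free H T \<and> range_plus H S \<subset> range_plus H T"
    then obtain T where cfT: "conflict_free H T" and lt: "range_plus H S \<subset> range_plus H T" by blast
    have TB: "T \<subseteq> B" using cfT args_H unfolding conflict_free_def by blast
    have eq: "range_plus (restrict F (K x)) (S \<inter> K x) = range_plus (restrict F (K x)) (T \<inter> K x)"
      if xB: "x \<in> B" for x
    proof -
      have cfTx: "conflict_free (restrict F (K x)) (T \<inter> K x)" using cf_iff[OF TB] cfT xB by blast
      have "range_plus (restrict F (K x)) (S \<inter> K x) \<subseteq> range_plus (restrict F (K x)) (T \<inter> K x)"
      proof
        fix y assume y: "y \<in> range_plus (restrict F (K x)) (S \<inter> K x)"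
        have yK: "y \<in> K x" using rp_sub2[of "S \<inter> K x" "K x"] y by blast
        have yB: "y \<in> B" using yK K_sub[of x] by blast
        have Ky: "K y = K x" using K_eq[OF yK] .
        have "y \<in> range_plus H S" using rp_iff[OF SB yB] y Ky by simp
        then have "y \<in> range_plus H T" using lt by blast
        then show "y \<in> range_plus (restrict F (K x)) (T \<inter> K x)" using rp_iff[OF TB yB] Ky by simp
      qed
      moreover have "stage_ext (restrict F (K x)) (S \<inter> K x)" using all xB by blast
      ultimately show ?thesis using cfTx unfolding stage_ext_def by blast
    qed
    have "range_plus H T \<subseteq> range_plus H S"
    proof
      fix y assume y: "y \<in> range_plus H T"
      have yB: "y \<in> B" using rp_sub1[OF TB] y by blast
      have "y \<in> range_plus (restrict F (K y)) (T \<inter> K y)" using rp_iff[OF TB yB] y by blast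
      then have "y \<in> range_plus (restrict F (K y)) (S \<inter> K y)" using eq[OF yB] by simp
      then show "y \<in> range_plus H S" using rp_iff[OF SB yB] by blast
    qed
    then show False using lt by blast
  qed
qed

end

theorem theorem9:
  fixes F :: "'a af" and S :: "'a set"
  assumes "wf_af F" and "S \<subseteq> args F"
  shows "tfstg2 F S \<longleftrightarrow>
           conflict_free F S \<and> stage_ext (scc_split (restrict F (args F - Delta F S))) S"
proof -
  let ?B = "args F - Delta F S"
  interpret dc F ?B using assms(1) by unfold_locales blast+
  have "conflict_free F S \<Longrightarrow> S \<subseteq> ?B"
  proof -
    assume cf: "conflict_free F S"
    have "x \<notin> Delta F S" if "x \<in> S" for x
    proof
      assume xD: "x \<in> Delta F S"
      obtain b where "b \<in> S" "(b, x) \<in> att F" using Delta_attacked[OF xD] by blast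
      then show False using cf that unfolding conflict_free_def by blast
    qed
    then show "S \<subseteq> ?B" using assms(2) by blast
  qed
  then show ?thesis using tfstg2_iff[OF assms(1), of S] decomp by blast
qed

end
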